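(* Let $n\ge 4$, $N=\{1,\dots,n\}$, fix distinct $i_1,i_2\in N$ and let $\hat N^c=N\setminus\{i_1,i_2\}$. Then the inequality $$\sum_{j\in\hat N^c}\left(x_{i_1j}+x_{ji_1}+x_{ji_2}\right)-x_{i_1i_2}-\sum_{j,j'\in\hat N^c:\,j\ne j'} x_{jj'}\le 3-\frac{(n-4)(n-5)}{2}$$ is a valid inequality for the weak order polytope $P^n_{WO}$, i.e. it holds for every point $x\in P^n_{WO}$.
   Context: Let $N=\{1,\dots,n\}$ and $A_N=\{(i,j): i,j\in N, i\ne j\}$. A weak order on $N$ is a binary relation $W\subseteq N\times N$ that is reflexive, transitive and total; $(i,j)\in W$ is read "$i$ is preferred over or tied with $j$". The characteristic vector of $W$ is $x^W\in\{0,1\}^{A_N}$ with $x^W_{(i,j)}=1$ if $(i,j)\in W$ and $0$ otherwise. The weak order polytope $P^n_{WO}$ is the convex hull of the characteristic vectors of all weak orders on $N$; its points are vectors $x\in\mathbb{R}^{A_N}$ and $x_{ij}$ denotes the coordinate $x_{(i,j)}$. *)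

theory Defs
  imports "HOL-Analysis.Analysis"
begin

definition arcs :: "nat \<Rightarrow> (nat \<times> nat) set" where
  "arcs n = {(i, j). i \<in> {1..n} \<and> j \<in> {1..n} \<and> i \<noteq> j}"

definition weak_order_on :: "nat \<Rightarrow> (nat \<times> nat) set \<Rightarrow> bool" where
  "weak_order_on n W \<longleftrightarrow> W \<subseteq> {1..n} \<times> {1..n} \<and> refl_on {1..n} W \<and> trans W
     \<and> (\<forall>i\<in>{1..n}. \<forall>j\<in>{1..n}. (i, j) \<in> W \<or> (j, i) \<in> W)"

text \<open>Characteristic vector in R^{A_N}; points of R^{A_N} are represented as
  real functions on pairs that vanish outside A_N.\<close>
definition char_vec :: "nat \<Rightarrow> (nat \<times> nat) set \<Rightarrow> (nat \<times> nat \<Rightarrow> real)" where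
  "char_vec n W = (\<lambda>a. if a \<in> arcs n \<and> a \<in> W then 1 else 0)"

definition weak_order_polytope :: "nat \<Rightarrow> (nat \<times> nat \<Rightarrow> real) set" where
  "weak_order_polytope n =
     {x. \<exists>S c. finite S \<and> S \<noteq> {} \<and> (\<forall>W\<in>S. weak_order_on n W) \<and> (\<forall>W\<in>S. c W \<ge> 0)
          \<and> sum c S = 1 \<and> x = (\<lambda>a. \<Sum>W\<in>S. c W * char_vec n W a)}"

end

theory Submission
  imports Defs
begin

definition offd :: "nat set \<Rightarrow> (nat \<times> nat) set" where
  "offd A = {(j, j'). j \<in> A \<and> j' \<in> A \<and> j \<noteq> j'}"

lemma card_offd:
  assumes "finite A"
  shows "real (card (offd A)) = real (card A) * real (card A) - real (card A)"
proof -
  have e: "offd A = A \<times> A - (\<lambda>a. (a, a)) ` A" unfolding offd_def by auto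
  have s: "(\<lambda>a. (a, a)) ` A \<subseteq> A \<times> A" by auto
  have c1: "card ((\<lambda>a. (a, a)) ` A) = card A"
    by (rule card_image) (auto simp: inj_on_def)
  have "card (offd A) = card A * card A - card A"
    unfolding e using assms s c1 by (simp add: card_Diff_subset finite_cartesian_product card_cartesian_product)
  moreover have "card A \<le> card A * card A" by (cases "card A") auto
  ultimately show ?thesis by (simp add: of_nat_diff)
qed

lemma vertex:
  fixes n i1 i2 :: nat
  assumes W: "weak_order_on n W" and n4: "n \<ge> 4"
    and i: "i1 \<in> {1..n}" "i2 \<in> {1..n}" "i1 \<noteq> i2"
  defines "x \<equiv> char_vec n W"
  shows "(\<Sum>j\<in>{1..n} - {i1, i2}. x (i1, j) + x (j, i1) + x (j, i2)) - x (i1, i2)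
           - (\<Sum>(j, j')\<in>{(j, j'). j \<in> {1..n} - {i1, i2} \<and> j' \<in> {1..n} - {i1, i2} \<and> j \<noteq> j'}. x (j, j'))
         \<le> 3 - (real n - 4) * (real n - 5) / 2"
proof -
  define C where "C = {1..n} - {i1, i2}"
  have finC: "finite C" unfolding C_def by auto
  have cardC: "card C = n - 2" unfolding C_def using i by (simp add: card_Diff_subset)
  define m where "m = real (card C)"
  have m: "real n - 4 = m - 2" "real n - 5 = m - 3" unfolding m_def cardC using n4 by auto
  have tot: "\<And>a b. a \<in> {1..n} \<Longrightarrow> b \<in> {1..n} \<Longrightarrow> (a, b) \<in> W \<or> (b, a) \<in> W"
    using W unfolding weak_order_on_def by blast
  have tr: "trans W" using W unfolding weak_order_on_def by blast
  have xv: "\<And>a b. a \<in> {1..n} \<Longrightarrow> b \<in> {1..n} \<Longrightarrow> a \<noteq> b \<Longrightarrow> x (a, b) = (if (a, b) \<in> W then 1 else 0)"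
    unfolding x_def char_vec_def arcs_def by auto
  have xnn: "\<And>p. x p \<ge> 0" unfolding x_def char_vec_def by auto
  define K where "K = {j \<in> C. (i1, j) \<in> W \<and> (j, i1) \<in> W \<and> (j, i2) \<in> W}"
  have KC: "K \<subseteq> C" unfolding K_def by auto
  have finK: "finite K" using KC finC finite_subset by blast
  define k where "k = real (card K)"
  have g: "\<And>j. j \<in> C \<Longrightarrow> x (i1, j) + x (j, i1) + x (j, i2) \<le> 2 + (if j \<in> K then 1 else 0)"
  proof -
    fix j assume j: "j \<in> C"
    hence jn: "j \<in> {1..n}" "j \<noteq> i1" "j \<noteq> i2" unfolding C_def by auto
    show "x (i1, j) + x (j, i1) + x (j, i2) \<le> 2 + (if j \<in> K then 1 else 0)"
      using xv[OF i(1) jn(1)] xv[OF jn(1) i(1)] xv[OF jn(1) i(2)] jn j unfolding K_def by auto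
  qed
  have sg: "(\<Sum>j\<in>C. x (i1, j) + x (j, i1) + x (j, i2)) \<le> 2 * m + k"
  proof -
    have "(\<Sum>j\<in>C. x (i1, j) + x (j, i1) + x (j, i2)) \<le> (\<Sum>j\<in>C. 2 + (if j \<in> K then 1 else 0))"
      by (rule sum_mono) (rule g)
    also have "\<dots> = 2 * m + k"
      using KC finC unfolding m_def k_def by (simp add: sum.distrib sum.If_cases Int_absorb1 Int_absorb2)
    finally show ?thesis .
  qed
  define S where "S = sum x (offd C)"
  have swap: "sum (\<lambda>p. x (snd p, fst p)) (offd C) = S"
  proof -
    have "sum (\<lambda>p. x (snd p, fst p)) (offd C) = sum (x \<circ> prod.swap) (offd C)"
      by (rule sum.cong) auto
    also have "\<dots> = sum x (prod.swap ` offd C)"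
      by (rule sum.reindex[symmetric]) simp
    also have "prod.swap ` offd C = offd C" unfolding offd_def by auto
    finally show ?thesis unfolding S_def .
  qed
  have pb: "\<And>p. p \<in> offd C \<Longrightarrow> 1 + (if p \<in> offd K then 1 else 0) \<le> x p + x (snd p, fst p)"
  proof -
    fix p assume p: "p \<in> offd C"
    obtain a b where ab: "p = (a, b)" by (cases p)
    have a: "a \<in> {1..n}" "b \<in> {1..n}" "a \<noteq> b" using p ab unfolding offd_def C_def by auto
    have t: "(a, b) \<in> W \<or> (b, a) \<in> W" using tot a by blast
    show "1 + (if p \<in> offd K then 1 else 0) \<le> x p + x (snd p, fst p)"
    proof (cases "p \<in> offd K")
      case True
      hence "a \<in> K" "b \<in> K" using ab unfolding offd_def by auto
      hence "(a, i1) \<in> W" "(i1, b) \<in> W" "(b, i1) \<in> W" "(i1, a) \<in> W" unfolding K_def by auto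
      hence "(a, b) \<in> W" "(b, a) \<in> W" using tr unfolding trans_def by blast+
      thus ?thesis using True ab xv[OF a(1) a(2) a(3)] xv[OF a(2) a(1)] a(3) by auto
    next
      case False
      thus ?thesis using t ab xv[OF a(1) a(2) a(3)] xv[OF a(2) a(1)] a(3) by auto
    qed
  qed
  have sS: "m * m - m + (k * k - k) \<le> 2 * S"
  proof -
    have "(\<Sum>p\<in>offd C. 1 + (if p \<in> offd K then 1 else 0)) \<le> (\<Sum>p\<in>offd C. x p + x (snd p, fst p))"
      by (rule sum_mono) (rule pb)
    also have "\<dots> = 2 * S" using swap unfolding S_def by (simp add: sum.distrib)
    moreover have "(\<Sum>p\<in>offd C. 1 + (if p \<in> offd K then (1::real) else 0))
        = real (card (offd C)) + real (card (offd K))"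
    proof -
      have "offd K \<subseteq> offd C" using KC unfolding offd_def by auto
      moreover have "finite (offd C)"
        by (rule finite_subset[OF _ finite_cartesian_product[OF finC finC]]) (auto simp: offd_def)
      ultimately show ?thesis by (simp add: sum.distrib sum.If_cases Int_absorb1 Int_absorb2)
    qed
    ultimately show ?thesis using card_offd[OF finC] card_offd[OF finK] unfolding m_def k_def by linarith
  qed
  have x12: "K \<noteq> {} \<Longrightarrow> x (i1, i2) = 1"
  proof -
    assume "K \<noteq> {}"
    then obtain j where "j \<in> K" by blast
    hence "(i1, j) \<in> W" "(j, i2) \<in> W" unfolding K_def by auto
    hence "(i1, i2) \<in> W" using tr unfolding trans_def by blast
    thus ?thesis using xv[OF i] by simp
  qed
  have eqS: "(\<Sum>(j, j')\<in>{(j, j'). j \<in> {1..n} - {i1, i2} \<and> j' \<in> {1..n} - {i1, i2} \<and> j \<noteq> j'}. x (j, j')) = S"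
    unfolding S_def offd_def C_def by simp
  have main: "2 * m + k - x (i1, i2) - S \<le> 3 - (m - 2) * (m - 3) / 2"
  proof -
  have ex: "(m - 2) * (m - 3) = m * m - 5 * m + 6" by (simp add: algebra_simps)
  show ?thesis
  proof (cases "K = {}")
    case True
    hence "k = 0" unfolding k_def by simp
    hence "m * m - m \<le> 2 * S" using sS by simp
    hence "2 * m + k - x (i1, i2) - S \<le> 2 * m - (m * m - m) / 2" using xnn[of "(i1, i2)"] \<open>k = 0\<close> by (simp add: field_simps)
    also have "\<dots> = 3 - (m - 2) * (m - 3) / 2" by (simp add: field_simps)
    finally show ?thesis .
  next
    case False
    hence "card K \<ge> 1" using finK by (simp add: Suc_le_eq card_gt_0_iff)
    hence "(k - 1) * (k - 2) \<ge> 0" unfolding k_def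
      by (cases "card K = 1") (auto intro!: mult_nonneg_nonneg)
    hence "k * k - 3 * k + 2 \<ge> 0" by (simp add: algebra_simps)
    have "2 * m + k - x (i1, i2) - S \<le> 2 * m + k - 1 - (m * m - m + (k * k - k)) / 2" using sS x12[OF False] by (simp add: field_simps)
    also have "\<dots> = 3 - (m - 2) * (m - 3) / 2 - (k * k - 3 * k + 2) / 2" by (simp add: field_simps)
    also have "\<dots> \<le> 3 - (m - 2) * (m - 3) / 2" using \<open>k * k - 3 * k + 2 \<ge> 0\<close> by simp
    finally show ?thesis .
  qed
  qed
  show ?thesis unfolding m eqS using main sg unfolding C_def by linarith
qed

lemma lin:
  fixes v :: "'w \<Rightarrow> nat \<times> nat \<Rightarrow> real" and c :: "'w \<Rightarrow> real"
  shows "(\<Sum>j\<in>C. (\<Sum>W\<in>S. c W * v W (i1, j)) + (\<Sum>W\<in>S. c W * v W (j, i1)) + (\<Sum>W\<in>S. c W * v W (j, i2)))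
     - (\<Sum>W\<in>S. c W * v W (i1, i2)) - (\<Sum>(j, j')\<in>P. (\<Sum>W\<in>S. c W * v W (j, j')))
   = (\<Sum>W\<in>S. c W * ((\<Sum>j\<in>C. v W (i1, j) + v W (j, i1) + v W (j, i2)) - v W (i1, i2) - (\<Sum>(j, j')\<in>P. v W (j, j'))))"
proof -
  have a: "(\<Sum>(j, j')\<in>P. (\<Sum>W\<in>S. c W * v W (j, j'))) = (\<Sum>W\<in>S. c W * (\<Sum>(j, j')\<in>P. v W (j, j')))"
    by (simp add: sum_distrib_left split_beta) (rule sum.swap)
  have b: "(\<Sum>j\<in>C. (\<Sum>W\<in>S. c W * v W (i1, j)) + (\<Sum>W\<in>S. c W * v W (j, i1)) + (\<Sum>W\<in>S. c W * v W (j, i2)))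
     = (\<Sum>W\<in>S. c W * (\<Sum>j\<in>C. v W (i1, j) + v W (j, i1) + v W (j, i2)))"
    by (simp add: sum_distrib_left distrib_left sum.distrib[symmetric]) (rule sum.swap)
  show ?thesis unfolding a b by (simp add: right_diff_distrib sum_subtractf)
qed

theorem mainTheorem6:
  fixes n i1 i2 :: nat and x :: "nat \<times> nat \<Rightarrow> real"
  assumes "n \<ge> 4"
    and "i1 \<in> {1..n}" and "i2 \<in> {1..n}" and "i1 \<noteq> i2"
    and "x \<in> weak_order_polytope n"
  shows "(\<Sum>j\<in>{1..n} - {i1, i2}. x (i1, j) + x (j, i1) + x (j, i2)) - x (i1, i2)
           - (\<Sum>(j, j')\<in>{(j, j'). j \<in> {1..n} - {i1, i2} \<and> j' \<in> {1..n} - {i1, i2} \<and> j \<noteq> j'}. x (j, j'))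
         \<le> 3 - (real n - 4) * (real n - 5) / 2"
proof -
  obtain S c where S: "finite S" "S \<noteq> {}" "\<forall>W\<in>S. weak_order_on n W" "\<forall>W\<in>S. c W \<ge> 0"
    "sum c S = 1" and xd: "x = (\<lambda>a. \<Sum>W\<in>S. c W * char_vec n W a)"
    using assms(5) unfolding weak_order_polytope_def by blast
  define R where "R = 3 - (real n - 4) * (real n - 5) / 2"
  have "(\<Sum>j\<in>{1..n} - {i1, i2}. x (i1, j) + x (j, i1) + x (j, i2)) - x (i1, i2)
           - (\<Sum>(j, j')\<in>{(j, j'). j \<in> {1..n} - {i1, i2} \<and> j' \<in> {1..n} - {i1, i2} \<and> j \<noteq> j'}. x (j, j'))
     = (\<Sum>W\<in>S. c W * ((\<Sum>j\<in>{1..n} - {i1, i2}. char_vec n W (i1, j) + char_vec n W (j, i1) + char_vec n W (j, i2)) - char_vec n W (i1, i2)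
           - (\<Sum>(j, j')\<in>{(j, j'). j \<in> {1..n} - {i1, i2} \<and> j' \<in> {1..n} - {i1, i2} \<and> j \<noteq> j'}. char_vec n W (j, j'))))"
    unfolding xd by (rule lin)
  also have "\<dots> \<le> (\<Sum>W\<in>S. c W * R)"
    apply (rule sum_mono)
    apply (rule mult_left_mono)
    using S vertex[OF _ assms(1-4)] unfolding R_def by auto
  also have "\<dots> = R" using S(5) by (simp add: sum_distrib_right[symmetric])
  finally show ?thesis unfolding R_def .
qed

end
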